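(* Let $k\ge1$ be an integer and let $G$ be a random threshold graph on $n\ge1$ vertices. Let $|k\text{-core}(G)|$ denote the number of vertices of the $k$-core of $G$. Then $$P(|k\text{-core}(G)|=0)=\sum_{i=0}^{k-1}\left(\tfrac12\right)^{n-1}\binom{n-1}{i},$$ and for every integer $j$ with $k+1\le j\le n$, $$P(|k\text{-core}(G)|=j)=\left(\tfrac12\right)^{n+k-j}\binom{n+k-j-1}{k-1}.$$
   Context: A threshold graph on $n\ge1$ vertices is built from a base vertex $v_0$ by successively adding $v_1,\dots,v_{n-1}$, each either isolated (adjacent to no earlier vertex) or dominating (adjacent to all earlier vertices); its creation sequence $\mathrm{seq}(G)=s_1\cdots s_{n-1}$ has $s_i=1$ if $v_i$ is dominating and $s_i=0$ otherwise, and each unlabeled threshold graph on $n$ vertices corresponds to exactly one binary string of length $n-1$. A random threshold graph on $n$ vertices is one whose creation sequence is uniformly distributed over all $2^{n-1}$ binary strings of length $n-1$. The $k$-core of a graph is its maximum induced subgraph in which every vertex has degree at least $k$ (possibly empty). *)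

theory Defs
  imports "HOL-Probability.Probability"
begin

text \<open>Creation sequences of length n-1 are boolean lists; entry s ! (i-1) is True
  iff vertex v_i (i = 1..n-1) is dominating. Vertices are 0..n-1 (v_0 the base vertex).\<close>

definition creation_seqs :: "nat \<Rightarrow> bool list set" where
  "creation_seqs n = {s. length s = n - 1}"

definition th_vertices :: "nat \<Rightarrow> nat set" where
  "th_vertices n = {..<n}"

definition th_adj :: "bool list \<Rightarrow> nat \<Rightarrow> nat \<Rightarrow> bool" where
  "th_adj s u v \<longleftrightarrow> u \<noteq> v \<and> s ! (max u v - 1)"

definition ind_degree :: "bool list \<Rightarrow> nat set \<Rightarrow> nat \<Rightarrow> nat" where
  "ind_degree s S v = card {u \<in> S. th_adj s u v}"

definition min_deg_ge :: "nat \<Rightarrow> bool list \<Rightarrow> nat set \<Rightarrow> bool" where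
  "min_deg_ge k s S \<longleftrightarrow> (\<forall>v\<in>S. k \<le> ind_degree s S v)"

definition kcore :: "nat \<Rightarrow> nat \<Rightarrow> bool list \<Rightarrow> nat set" where
  "kcore k n s = \<Union>{S. S \<subseteq> th_vertices n \<and> min_deg_ge k s S}"

definition random_threshold :: "nat \<Rightarrow> bool list pmf" where
  "random_threshold n = pmf_of_set (creation_seqs n)"

end

theory Submission
  imports Defs
begin


lemma coreA:
  assumes len: "length s = n - 1" and c: "card {i. i < length s \<and> s!i} < k"
  shows "kcore k n s = {}"
proof -
  have "S = {}" if S: "S \<subseteq> th_vertices n" "min_deg_ge k s S" for S
  proof (rule ccontr)
    assume ne: "S \<noteq> {}"
    have fin: "finite S" using S(1) unfolding th_vertices_def by (meson finite_lessThan finite_subset)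
    define m0 where "m0 = Min S"
    have m0S: "m0 \<in> S" using fin ne m0_def by simp
    have sub: "{u \<in> S. th_adj s u m0} \<subseteq> Suc ` {i. i < length s \<and> s!i}"
    proof
      fix u assume u: "u \<in> {u \<in> S. th_adj s u m0}"
      hence "u \<noteq> m0" "s ! (max u m0 - 1)" "u \<in> S" unfolding th_adj_def by auto
      moreover have "m0 \<le> u" using fin \<open>u \<in> S\<close> m0_def by simp
      ultimately have "m0 < u" "s ! (u - 1)" by (auto simp: max_def)
      moreover have "u < n" using \<open>u \<in> S\<close> S(1) unfolding th_vertices_def by auto
      ultimately show "u \<in> Suc ` {i. i < length s \<and> s!i}" using len
        by (auto intro!: image_eqI[of u Suc "u - 1"])
    qed
    have "card {u \<in> S. th_adj s u m0} \<le> card (Suc ` {i. i < length s \<and> s!i})"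
      by (rule card_mono[OF _ sub]) auto
    also have "\<dots> = card {i. i < length s \<and> s!i}" by (simp add: card_image)
    finally have "ind_degree s S m0 < k" using c unfolding ind_degree_def by simp
    thus False using S(2) m0S unfolding min_deg_ge_def by force
  qed
  thus ?thesis unfolding kcore_def by blast
qed

lemma coreB:
  assumes len: "length s = n - 1" and q: "q < n - 1" "s ! q" and k: "k \<ge> 1"
    and c: "card {i. q < i \<and> i < n - 1 \<and> s!i} = k - 1"
  shows "kcore k n s = {..q+1} \<union> {u. q+1 < u \<and> u < n \<and> s!(u-1)}"
    and "card (kcore k n s) = q + k + 1"
proof -
  define L where "L = {u. q+1 < u \<and> u < n \<and> s!(u-1)}"
  define C where "C = {..q+1} \<union> L"
  have L_eq: "L = Suc ` {i. q < i \<and> i < n - 1 \<and> s!i}"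
    unfolding L_def
  proof (intro set_eqI iffI)
    fix u assume "u \<in> {u. q+1 < u \<and> u < n \<and> s!(u-1)}"
    thus "u \<in> Suc ` {i. q < i \<and> i < n - 1 \<and> s!i}"
      by (auto intro!: image_eqI[of u Suc "u - 1"])
  qed auto
  have cardL: "card L = k - 1" using c L_eq by (simp add: card_image)
  have finL: "finite L" unfolding L_def by auto
  have disj: "{..q+1} \<inter> L = {}" unfolding L_def by auto
  have cardC: "card C = q + k + 1" unfolding C_def
    using card_Un_disjoint[OF _ finL disj] cardL k by simp
  have finC: "finite C" unfolding C_def using finL by simp
  have Cv: "C \<subseteq> th_vertices n" unfolding C_def L_def th_vertices_def using q by auto
  have md: "min_deg_ge k s C" unfolding min_deg_ge_def ind_degree_def
  proof
    fix v assume vC: "v \<in> C"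
    show "k \<le> card {u \<in> C. th_adj s u v}"
    proof (cases "v \<in> L")
      case True
      hence sv: "s!(v-1)" "q+1 < v" unfolding L_def by auto
      have "C - {v} \<subseteq> {u \<in> C. th_adj s u v}"
      proof
        fix u assume u: "u \<in> C - {v}"
        show "u \<in> {u \<in> C. th_adj s u v}"
        proof (cases "u < v")
          case True thus ?thesis using u sv unfolding th_adj_def by (auto simp: max_def)
        next
          case False
          hence "u \<in> L" using u sv unfolding C_def by auto
          thus ?thesis using u False unfolding th_adj_def L_def by (auto simp: max_def)
        qed
      qed
      hence "card (C - {v}) \<le> card {u \<in> C. th_adj s u v}" by (intro card_mono) (use finC in auto)
      moreover have "card (C - {v}) = q + k" using cardC vC finC by simp
      ultimately show ?thesis by simp
    next
      case False
      hence vle: "v \<le> q + 1" using vC unfolding C_def by auto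
      define w where "w = (if v = q + 1 then 0 else q + 1)"
      have wC: "w \<in> C" "w \<notin> L" "w \<noteq> v" unfolding w_def C_def L_def by auto
      have wadj: "th_adj s w v" using wC vle q(2) unfolding th_adj_def w_def by (auto simp: max_def)
      have "insert w (L - {v}) \<subseteq> {u \<in> C. th_adj s u v}"
      proof
        fix u assume u: "u \<in> insert w (L - {v})"
        show "u \<in> {u \<in> C. th_adj s u v}"
        proof (cases "u = w")
          case True thus ?thesis using wC wadj by simp
        next
          case False
          hence "u \<in> L" using u by simp
          thus ?thesis using vle unfolding th_adj_def L_def C_def by (auto simp: max_def)
        qed
      qed
      hence "card (insert w (L - {v})) \<le> card {u \<in> C. th_adj s u v}" by (intro card_mono) (use finC in auto)
      moreover have "card (insert w (L - {v})) = k" using False wC finL cardL k by simp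
      ultimately show ?thesis by simp
    qed
  qed
  have "C \<subseteq> kcore k n s" unfolding kcore_def using Cv md by blast
  moreover have "kcore k n s \<subseteq> C"
  proof
    fix v assume "v \<in> kcore k n s"
    then obtain S where S: "S \<subseteq> th_vertices n" "min_deg_ge k s S" "v \<in> S" unfolding kcore_def by blast
    show "v \<in> C"
    proof (rule ccontr)
      assume nv: "v \<notin> C"
      have vn: "v < n" using S unfolding th_vertices_def by auto
      hence nsv: "\<not> s!(v-1)" "q + 1 < v" using nv unfolding C_def L_def by auto
      have "{u \<in> S. th_adj s u v} \<subseteq> L"
      proof
        fix u assume u: "u \<in> {u \<in> S. th_adj s u v}"
        hence "u \<noteq> v" "s!(max u v - 1)" "u < n" using S(1) unfolding th_adj_def th_vertices_def by auto
        hence "v < u" "s!(u-1)" using nsv by (auto simp: max_def split: if_splits)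
        thus "u \<in> L" using nsv \<open>u < n\<close> unfolding L_def by auto
      qed
      hence "card {u \<in> S. th_adj s u v} \<le> k - 1" using card_mono[OF finL] cardL by metis
      moreover have "k \<le> card {u \<in> S. th_adj s u v}" using S unfolding min_deg_ge_def ind_degree_def by blast
      ultimately show False using k by simp
    qed
  qed
  ultimately have "kcore k n s = C" by blast
  thus "kcore k n s = {..q+1} \<union> {u. q+1 < u \<and> u < n \<and> s!(u-1)}" "card (kcore k n s) = q + k + 1"
    using cardC unfolding C_def L_def by auto
qed

lemma exists_kth:
  fixes T :: "nat set"
  assumes "finite T" "0 < m" "m \<le> card T"
  shows "\<exists>q\<in>T. card {i\<in>T. q < i} = m - 1"
  using assms(2,3)
proof (induction m)
  case 0 thus ?case by simp
next
  case (Suc m)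
  show ?case
  proof (cases "m = 0")
    case True
    have ne: "T \<noteq> {}" using Suc.prems by auto
    have "{i\<in>T. Max T < i} = {}" using assms(1) Max_ge[OF assms(1)] by (auto simp: not_less[symmetric])
    hence e: "card {i\<in>T. Max T < i} = 0" by (metis card.empty)
    show ?thesis
    proof (rule bexI[of _ "Max T"])
      show "card {i\<in>T. Max T < i} = Suc m - 1" using e True by simp
      show "Max T \<in> T" using Max_in[OF assms(1) ne] .
    qed
  next
    case False
    then obtain q where q: "q \<in> T" "card {i\<in>T. q < i} = m - 1" using Suc by auto
    have "{i\<in>T. q \<le> i} = insert q {i\<in>T. q < i}" using q by auto
    hence c1: "card {i\<in>T. q \<le> i} = m" using q False assms(1) by simp
    have "T = {i\<in>T. q \<le> i} \<union> {i\<in>T. i < q}" by auto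
    hence "card T \<le> m + card {i\<in>T. i < q}" using c1 card_Un_le by metis
    hence "card {i\<in>T. i < q} \<noteq> 0" using Suc.prems by linarith
    hence ne: "{i\<in>T. i < q} \<noteq> {}" by (metis card.empty)
    define q' where "q' = Max {i\<in>T. i < q}"
    have fin': "finite {i\<in>T. i < q}" using assms(1) by simp
    have q'in: "q' \<in> T" "q' < q" using Max_in[OF fin' ne] q'_def by auto
    have "{i\<in>T. q' < i} = {i\<in>T. q \<le> i}"
    proof (intro set_eqI iffI)
      fix i assume i: "i \<in> {i\<in>T. q' < i}"
      show "i \<in> {i\<in>T. q \<le> i}"
      proof (rule ccontr)
        assume "i \<notin> {i\<in>T. q \<le> i}"
        hence "i \<in> {i\<in>T. i < q}" using i by auto
        hence "i \<le> q'" using Max_ge[OF fin'] q'_def by auto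
        thus False using i by auto
      qed
    qed (use q'in in auto)
    hence "card {i\<in>T. q' < i} = Suc m - 1" using c1 by simp
    thus ?thesis using q'in(1) by blast
  qed
qed

lemma card_ones_le: "card {i. q < i \<and> i < length s \<and> s!i} \<le> card {i. i < length s \<and> s!i}"
  by (rule card_mono) auto

lemma core_iff:
  assumes len: "length s = n - 1" and k: "k \<ge> 1"
  shows "card (kcore k n s) = 0 \<longleftrightarrow> card {i. i < n - 1 \<and> s!i} < k"
    and "k + 1 \<le> j \<Longrightarrow> j \<le> n \<Longrightarrow>
      card (kcore k n s) = j \<longleftrightarrow> s!(j-k-1) \<and> card {i. j-k-1 < i \<and> i < n - 1 \<and> s!i} = k - 1"
proof -
  define T where "T = {i. i < n - 1 \<and> s!i}"
  have finT: "finite T" unfolding T_def by simp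
  have big: "\<exists>q. q < n - 1 \<and> s!q \<and> card {i. q < i \<and> i < n - 1 \<and> s!i} = k - 1 \<and> card (kcore k n s) = q + k + 1"
    if kT: "k \<le> card T"
  proof -
    obtain q where q: "q \<in> T" "card {i\<in>T. q < i} = k - 1" using exists_kth[OF finT, of k] kT k by auto
    have e: "{i\<in>T. q < i} = {i. q < i \<and> i < n - 1 \<and> s!i}" unfolding T_def by auto
    have "q < n - 1" "s!q" using q unfolding T_def by auto
    moreover have "card (kcore k n s) = q + k + 1" using coreB(2)[OF len \<open>q < n - 1\<close> \<open>s!q\<close> k] q e by simp
    ultimately show ?thesis using q e by auto
  qed
  show "card (kcore k n s) = 0 \<longleftrightarrow> card {i. i < n - 1 \<and> s!i} < k"
  proof
    assume "card (kcore k n s) = 0"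
    thus "card {i. i < n - 1 \<and> s!i} < k" using big unfolding T_def by force
  next
    assume "card {i. i < n - 1 \<and> s!i} < k"
    thus "card (kcore k n s) = 0" using coreA[OF len] len by simp
  qed
  assume j: "k + 1 \<le> j" "j \<le> n"
  show "card (kcore k n s) = j \<longleftrightarrow> s!(j-k-1) \<and> card {i. j-k-1 < i \<and> i < n - 1 \<and> s!i} = k - 1"
  proof
    assume cj: "card (kcore k n s) = j"
    have "\<not> card T < k"
    proof
      assume "card T < k"
      hence "kcore k n s = {}" using coreA[OF len] len unfolding T_def by simp
      thus False using cj j by simp
    qed
    then obtain q where "q < n - 1 \<and> s!q \<and> card {i. q < i \<and> i < n - 1 \<and> s!i} = k - 1 \<and> card (kcore k n s) = q + k + 1"
      using big by force
    moreover hence "q = j - k - 1" using cj by simp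
    ultimately show "s!(j-k-1) \<and> card {i. j-k-1 < i \<and> i < n - 1 \<and> s!i} = k - 1" by simp
  next
    assume a: "s!(j-k-1) \<and> card {i. j-k-1 < i \<and> i < n - 1 \<and> s!i} = k - 1"
    have "j - k - 1 < n - 1" using j k by simp
    from coreB(2)[OF len this _ k] a j show "card (kcore k n s) = j" by simp
  qed
qed

lemma count_lists:
  "card {s. length s = m \<and> P {i. i < m \<and> s!i}} = card {A\<in>Pow {..<m}. P A}"
proof -
  let ?f = "\<lambda>s. {i. i < m \<and> s!i}"
  let ?X = "{s. length s = m \<and> P {i. i < m \<and> s!i}}"
  have inj: "inj_on ?f ?X"
  proof
    fix s t assume s: "s \<in> ?X" and t: "t \<in> ?X" and e: "?f s = ?f t"
    show "s = t"
    proof (rule nth_equalityI)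
      show "length s = length t" using s t by simp
      fix i assume "i < length s"
      hence "i < m" using s by simp
      thus "s!i = t!i" using e by blast
    qed
  qed
  have img: "?f ` ?X = {A\<in>Pow {..<m}. P A}"
  proof (intro set_eqI iffI)
    fix A assume "A \<in> ?f ` ?X" thus "A \<in> {A\<in>Pow {..<m}. P A}" by auto
  next
    fix A assume A: "A \<in> {A\<in>Pow {..<m}. P A}"
    define s where "s = map (\<lambda>i. i \<in> A) [0..<m]"
    have "?f s = A" using A unfolding s_def by auto
    moreover have "s \<in> ?X" using A \<open>?f s = A\<close> unfolding s_def by simp
    ultimately show "A \<in> ?f ` ?X" by blast
  qed
  show ?thesis using card_image[OF inj] img by simp
qed

lemma count0:
  assumes "k \<ge> 1"
  shows "card {A\<in>Pow {..<m::nat}. card A < k} = (\<Sum>i=0..k-1. m choose i)"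
proof -
  have e: "{A\<in>Pow {..<m::nat}. card A < k} = (\<Union>i\<in>{0..k-1}. {A. A \<subseteq> {..<m} \<and> card A = i})"
    using assms by auto
  have "card (\<Union>i\<in>{0..k-1}. {A. A \<subseteq> {..<m} \<and> card A = i}) = (\<Sum>i=0..k-1. card {A. A \<subseteq> {..<m} \<and> card A = i})"
    by (rule card_UN_disjoint) auto
  also have "\<dots> = (\<Sum>i=0..k-1. m choose i)" by (simp add: n_subsets)
  finally show ?thesis using e by simp
qed

lemma countj:
  assumes q: "q < m"
  shows "card {A\<in>Pow {..<m::nat}. q \<in> A \<and> card {i\<in>A. q < i} = r} = 2^q * ((m-q-1) choose r)"
proof -
  let ?X = "{A\<in>Pow {..<m::nat}. q \<in> A \<and> card {i\<in>A. q < i} = r}"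
  let ?Y = "Pow {..<q} \<times> {B. B \<subseteq> {q<..<m} \<and> card B = r}"
  let ?f = "\<lambda>A. (A \<inter> {..<q}, A \<inter> {q<..<m})"
  let ?g = "\<lambda>(X,Y). X \<union> {q} \<union> Y"
  have b: "bij_betw ?f ?X ?Y"
  proof (rule bij_betw_byWitness[where f'="?g"])
    show "\<forall>a\<in>?X. ?g (?f a) = a" by auto
    show "\<forall>a\<in>?Y. ?f (?g a) = a" by auto
    show "?f ` ?X \<subseteq> ?Y"
    proof
      fix y assume "y \<in> ?f ` ?X"
      then obtain A where A: "A \<in> ?X" "y = ?f A" by blast
      have "A \<inter> {q<..<m} = {i\<in>A. q < i}" using A by auto
      thus "y \<in> ?Y" using A by auto
    qed
    show "?g ` ?Y \<subseteq> ?X"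
    proof
      fix x assume "x \<in> ?g ` ?Y"
      then obtain X Y where XY: "(X,Y) \<in> ?Y" "x = X \<union> {q} \<union> Y" by auto
      have "{i\<in>x. q < i} = Y" using XY by auto
      thus "x \<in> ?X" using XY q by auto
    qed
  qed
  have "card ?X = card ?Y" using bij_betw_same_card[OF b] .
  also have "\<dots> = 2^q * ((m-q-1) choose r)"
    by (simp add: card_cartesian_product card_Pow n_subsets)
  finally show ?thesis .
qed

lemma card_seqs: "card (creation_seqs n) = 2^(n-1)"
  using count_lists[of "n-1" "\<lambda>_. True"] card_Pow[of "{..<n-1}"] unfolding creation_seqs_def Pow_def by simp

lemma prob_eq: "measure_pmf.prob (random_threshold n) E = card {s. length s = n - 1 \<and> s \<in> E} / 2^(n-1)"
proof -
  have fin: "finite (creation_seqs n)" unfolding creation_seqs_def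
    using finite_lists_length_eq[of "UNIV::bool set" "n-1"] by simp
  have ne: "creation_seqs n \<noteq> {}" unfolding creation_seqs_def
    by (auto intro!: exI[of _ "replicate (n-1) True"])
  have "creation_seqs n \<inter> E = {s. length s = n - 1 \<and> s \<in> E}" unfolding creation_seqs_def by auto
  thus ?thesis unfolding random_threshold_def using measure_pmf_of_set[OF ne fin, of E] card_seqs[of n]
    by simp
qed

theorem mainTheorem15:
  fixes k n :: nat
  assumes "k \<ge> 1" and "n \<ge> 1"
  shows "measure_pmf.prob (random_threshold n) {s. card (kcore k n s) = 0}
           = (\<Sum>i=0..k-1. (1/2::real) ^ (n - 1) * real ((n - 1) choose i))
         \<and> (\<forall>j. k + 1 \<le> j \<and> j \<le> n \<longrightarrow>
           measure_pmf.prob (random_threshold n) {s. card (kcore k n s) = j}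
           = (1/2::real) ^ (n + k - j) * real ((n + k - j - 1) choose (k - 1)))"
proof (intro conjI allI impI)
  have "{s. length s = n - 1 \<and> s \<in> {s. card (kcore k n s) = 0}}
      = {s. length s = n - 1 \<and> card {i. i < n - 1 \<and> s!i} < k}"
    using core_iff(1)[OF _ assms(1)] by auto
  hence "card {s. length s = n - 1 \<and> s \<in> {s. card (kcore k n s) = 0}} = (\<Sum>i=0..k-1. (n-1) choose i)"
    using count_lists[of "n-1" "\<lambda>A. card A < k"] count0[OF assms(1)] by simp
  hence "measure_pmf.prob (random_threshold n) {s. card (kcore k n s) = 0}
     = real (\<Sum>i=0..k-1. (n-1) choose i) / 2^(n-1)" by (simp add: prob_eq)
  also have "\<dots> = (\<Sum>i=0..k-1. (1/2::real) ^ (n - 1) * real ((n - 1) choose i))"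
    by (simp add: sum_divide_distrib power_one_over field_simps)
  finally show "measure_pmf.prob (random_threshold n) {s. card (kcore k n s) = 0}
           = (\<Sum>i=0..k-1. (1/2::real) ^ (n - 1) * real ((n - 1) choose i))" .
next
  fix j assume j: "k + 1 \<le> j \<and> j \<le> n"
  define q where "q = j - k - 1"
  have q: "q < n - 1" using j assms unfolding q_def by presburger
  have "{s. length s = n - 1 \<and> s \<in> {s. card (kcore k n s) = j}}
      = {s. length s = n - 1 \<and> (\<lambda>A. q \<in> A \<and> card {i\<in>A. q < i} = k - 1) {i. i < n - 1 \<and> s!i}}"
  proof (intro set_eqI iffI)
    fix s assume "s \<in> {s. length s = n - 1 \<and> s \<in> {s. card (kcore k n s) = j}}"
    hence s0: "length s = n - 1" "card (kcore k n s) = j" by auto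
    have ci: "card (kcore k n s) = j \<longleftrightarrow> s!(j-k-1) \<and> card {i. j-k-1 < i \<and> i < n - 1 \<and> s!i} = k - 1"
      using core_iff(2)[OF s0(1) assms(1)] j by blast
    have s: "length s = n - 1" "s!q" "card {i. q < i \<and> i < n - 1 \<and> s!i} = k - 1"
      using ci s0 unfolding q_def by auto
    have "{i\<in>{i. i < n - 1 \<and> s!i}. q < i} = {i. q < i \<and> i < n - 1 \<and> s!i}" by auto
    thus "s \<in> {s. length s = n - 1 \<and> (\<lambda>A. q \<in> A \<and> card {i\<in>A. q < i} = k - 1) {i. i < n - 1 \<and> s!i}}"
      using s q by auto
  next
    fix s assume "s \<in> {s. length s = n - 1 \<and> (\<lambda>A. q \<in> A \<and> card {i\<in>A. q < i} = k - 1) {i. i < n - 1 \<and> s!i}}"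
    hence s: "length s = n - 1" "q \<in> {i. i < n - 1 \<and> s!i}" "card {i\<in>{i. i < n - 1 \<and> s!i}. q < i} = k - 1" by auto
    have "{i\<in>{i. i < n - 1 \<and> s!i}. q < i} = {i. q < i \<and> i < n - 1 \<and> s!i}" by auto
    hence "s!(j-k-1) \<and> card {i. j-k-1 < i \<and> i < n - 1 \<and> s!i} = k - 1" using s unfolding q_def by auto
    moreover have "card (kcore k n s) = j \<longleftrightarrow> s!(j-k-1) \<and> card {i. j-k-1 < i \<and> i < n - 1 \<and> s!i} = k - 1"
      using core_iff(2)[OF s(1) assms(1)] j by blast
    ultimately have "card (kcore k n s) = j" by blast
    thus "s \<in> {s. length s = n - 1 \<and> s \<in> {s. card (kcore k n s) = j}}"
      using s(1) by simp
  qed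
  hence "card {s. length s = n - 1 \<and> s \<in> {s. card (kcore k n s) = j}} = 2^q * ((n-1-q-1) choose (k-1))"
    using count_lists[of "n-1" "\<lambda>A. q \<in> A \<and> card {i\<in>A. q < i} = k - 1"] countj[OF q, of "k-1"]
    by simp
  moreover have "n-1-q-1 = n + k - j - 1" "n - 1 = q + (n + k - j)" using j assms unfolding q_def by auto
  ultimately have "measure_pmf.prob (random_threshold n) {s. card (kcore k n s) = j}
     = real (2^q * ((n + k - j - 1) choose (k-1))) / 2^(q + (n + k - j))" by (simp add: prob_eq)
  also have "\<dots> = (1/2::real) ^ (n + k - j) * real ((n + k - j - 1) choose (k - 1))"
    by (simp add: power_add power_one_over field_simps)
  finally show "measure_pmf.prob (random_threshold n) {s. card (kcore k n s) = j}
           = (1/2::real) ^ (n + k - j) * real ((n + k - j - 1) choose (k - 1))" .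
qed

end
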